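(* Let $T$ be a string of length $n$ and $1\le i\le j<n$. Let $k=|\mathit{lrs}_{i,j+1}|$ and $\alpha=T[j+1]$. Then $[j+1-k,j+1]\in\mathsf{MUS}(T[i..j+1])$ if and only if $T[j+1-k..j+1]=\alpha^{k+1}$ or $k\le|\mathit{lrs}_{i,j}|$.
   Context: $T[a..b]$ denotes the substring of $T$ from position $a$ to $b$; $\alpha^m$ is the string of $m$ copies of character $\alpha$. For strings $S,w$, $\#\mathit{occ}_S(w)$ is the number of positions at which $w$ occurs in $S$, with $\#\mathit{occ}_S(\varepsilon)=|S|+1$. A substring $w$ of $S$ is unique in $S$ if $\#\mathit{occ}_S(w)=1$ and repeating if $\#\mathit{occ}_S(w)\ge 2$. For $1\le i\le j\le n$, $\mathsf{MUS}(T[i..j])$ is the set of intervals $[s,t]$ (positions in $T$) with $i\le s\le t\le j$ such that $T[s..t]$ is unique in $T[i..j]$ and every proper substring of $T[s..t]$ (including the empty string) is repeating in $T[i..j]$. $\mathit{lrs}_{i,j}$ is the longest suffix of $T[i..j]$ that occurs at least twice in $T[i..j]$ (possibly empty). *)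

theory Defs
  imports Main
begin

text \<open>Strings are lists; positions in T are 1-based as in the paper.
  substr T a b is T[a..b] (empty if b < a).\<close>

definition substr :: "'a list \<Rightarrow> nat \<Rightarrow> nat \<Rightarrow> 'a list" where
  "substr T a b = take (Suc b - a) (drop (a - 1) T)"

text \<open>Number of occurrences of w in S (occ S [] = |S|+1).\<close>
definition occ :: "'a list \<Rightarrow> 'a list \<Rightarrow> nat" where
  "occ S w = card {p. p + length w \<le> length S \<and> take (length w) (drop p S) = w}"

definition unique_in :: "'a list \<Rightarrow> 'a list \<Rightarrow> bool" where
  "unique_in S w \<longleftrightarrow> occ S w = 1"

definition repeating_in :: "'a list \<Rightarrow> 'a list \<Rightarrow> bool" where
  "repeating_in S w \<longleftrightarrow> occ S w \<ge> 2"

definition is_substring :: "'a list \<Rightarrow> 'a list \<Rightarrow> bool" where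
  "is_substring u w \<longleftrightarrow> (\<exists>p q. w = p @ u @ q)"

definition MUS :: "'a list \<Rightarrow> nat \<Rightarrow> nat \<Rightarrow> (nat \<times> nat) set" where
  "MUS T i j = {(s, t). i \<le> s \<and> s \<le> t \<and> t \<le> j \<and>
      unique_in (substr T i j) (substr T s t) \<and>
      (\<forall>u. is_substring u (substr T s t) \<and> u \<noteq> substr T s t
            \<longrightarrow> repeating_in (substr T i j) u)}"

text \<open>Longest suffix of S occurring at least twice in S (possibly empty).\<close>
definition lrs_of :: "'a list \<Rightarrow> 'a list" where
  "lrs_of S = drop (length S - Max {k. k \<le> length S \<and> repeating_in S (drop (length S - k) S)}) S"

definition lrs :: "'a list \<Rightarrow> nat \<Rightarrow> nat \<Rightarrow> 'a list" where
  "lrs T i j = lrs_of (substr T i j)"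

end

theory Submission imports Defs begin

definition OS :: "'a list \<Rightarrow> 'a list \<Rightarrow> nat set" where
  "OS S w = {p. p + length w \<le> length S \<and> take (length w) (drop p S) = w}"

lemma occ_OS: "occ S w = card (OS S w)"
  by (simp add: occ_def OS_def)

lemma OS_finite: "finite (OS S w)"
  by (rule finite_subset[of _ "{..length S}"]) (auto simp: OS_def)

lemma rep_iff: "repeating_in S w \<longleftrightarrow> (\<exists>p q. p \<in> OS S w \<and> q \<in> OS S w \<and> p \<noteq> q)"
proof -
  have "2 \<le> card (OS S w) \<longleftrightarrow> \<not> card (OS S w) \<le> Suc 0" by auto
  also have "\<dots> \<longleftrightarrow> (\<exists>p q. p \<in> OS S w \<and> q \<in> OS S w \<and> p \<noteq> q)"
    using card_le_Suc0_iff_eq[OF OS_finite] by blast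
  finally show ?thesis by (simp add: repeating_in_def occ_OS)
qed

lemma uniq_from: "p \<in> OS S w \<Longrightarrow> \<not> repeating_in S w \<Longrightarrow> unique_in S w"
proof -
  assume a: "p \<in> OS S w" "\<not> repeating_in S w"
  have "card (OS S w) \<noteq> 0" using a(1) OS_finite by (metis card_0_eq empty_iff)
  then show ?thesis using a(2) by (simp add: unique_in_def repeating_in_def occ_OS)
qed

lemma OS_sub: "P \<in> OS S (p @ u @ q) \<Longrightarrow> P + length p \<in> OS S u"
proof -
  assume a: "P \<in> OS S (p @ u @ q)"
  let ?X = "drop P S"
  have 1: "take (length p + length u + length q) ?X = p @ u @ q" and 2: "P + (length p + length u + length q) \<le> length S"
    using a by (auto simp: OS_def add.assoc)
  have "?X = p @ u @ q @ drop (length p + length u + length q) ?X"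
    using append_take_drop_id[of "length p + length u + length q" ?X] 1 by simp
  then have "drop (P + length p) S = u @ q @ drop (length p + length u + length q) ?X"
  proof -
    have "drop (P + length p) S = drop (length p) ?X" by (simp add: add.commute)
    also have "\<dots> = u @ q @ drop (length p + length u + length q) ?X"
      by (subst \<open>?X = _\<close>) simp
    finally show ?thesis .
  qed
  then show ?thesis using 2 by (simp add: OS_def)
qed

lemma rep_sub: "repeating_in S (p @ u @ q) \<Longrightarrow> repeating_in S u"
proof -
  assume "repeating_in S (p @ u @ q)"
  then obtain a b where "a \<in> OS S (p @ u @ q)" "b \<in> OS S (p @ u @ q)" "a \<noteq> b"
    unfolding rep_iff by blast
  then have "a + length p \<in> OS S u" "b + length p \<in> OS S u" "a + length p \<noteq> b + length p"
    using OS_sub by auto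
  then show ?thesis unfolding rep_iff by blast
qed

lemma rep_substr: "is_substring u v \<Longrightarrow> repeating_in S v \<Longrightarrow> repeating_in S u"
  unfolding is_substring_def using rep_sub by blast

lemma OS_butlast: "p \<in> OS S' u \<Longrightarrow> p \<in> OS (S' @ [a]) u"
  by (auto simp: OS_def)

lemma OS_butlast2: "p \<in> OS (S' @ [a]) u \<Longrightarrow> p + length u \<le> length S' \<Longrightarrow> p \<in> OS S' u"
  by (auto simp: OS_def)

definition RR :: "'a list \<Rightarrow> nat set" where
  "RR S = {k. k \<le> length S \<and> repeating_in S (drop (length S - k) S)}"

lemma OS_Nil: "OS S [] = {..length S}" by (auto simp: OS_def)

lemma rep_Nil: "S \<noteq> [] \<Longrightarrow> repeating_in S []"
  by (cases S) (simp_all add: repeating_in_def occ_OS OS_Nil)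

lemma RR_fin: "finite (RR S)" by (rule finite_subset[of _ "{..length S}"]) (auto simp: RR_def)

lemma RR_0: "S \<noteq> [] \<Longrightarrow> 0 \<in> RR S" by (simp add: RR_def rep_Nil)

lemma lrs_len: "S \<noteq> [] \<Longrightarrow> length (lrs_of S) = Max (RR S)"
proof -
  assume "S \<noteq> []"
  have "Max (RR S) \<in> RR S" using Max_in[OF RR_fin] RR_0[OF \<open>S \<noteq> []\<close>] by blast
  then have "Max (RR S) \<le> length S" by (simp add: RR_def)
  then show ?thesis by (simp add: lrs_of_def RR_def[symmetric])
qed

lemma lrs_in: "S \<noteq> [] \<Longrightarrow> Max (RR S) \<in> RR S"
  using Max_in[OF RR_fin] RR_0 by blast

lemma lrs_ge: "k \<in> RR S \<Longrightarrow> k \<le> Max (RR S)"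
  using Max_ge[OF RR_fin] by blast

lemma not_rep_self: "\<not> repeating_in S S"
proof -
  have "OS S S = {0}" by (auto simp: OS_def)
  then show ?thesis by (simp add: repeating_in_def occ_OS)
qed

lemma lrs_lt: "S \<noteq> [] \<Longrightarrow> Max (RR S) < length S"
proof -
  assume ne: "S \<noteq> []"
  have "length S \<notin> RR S" using not_rep_self by (simp add: RR_def)
  moreover have "Max (RR S) \<le> length S" using lrs_in[OF ne] by (simp add: RR_def)
  ultimately show ?thesis using lrs_in[OF ne] by (metis le_neq_implies_less)
qed

lemma suffix_rep: assumes "S \<noteq> []" "k \<le> Max (RR S)"
  shows "repeating_in S (drop (length S - k) S)"
proof -
  let ?M = "Max (RR S)"
  have r: "repeating_in S (drop (length S - ?M) S)" using lrs_in[OF assms(1)] by (simp add: RR_def)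
  have M: "?M \<le> length S" using lrs_lt[OF assms(1)] by simp
  define d where "d = length S - ?M"
  define e where "e = length S - k"
  have de: "e = (e - d) + d" using assms(2) M unfolding d_def e_def by simp
  have "drop d S = take (e - d) (drop d S) @ drop (e - d) (drop d S)" by (rule append_take_drop_id[symmetric])
  moreover have "drop (e - d) (drop d S) = drop e S" by (simp add: de[symmetric])
  ultimately have "drop d S = take (e - d) (drop d S) @ drop e S @ []" by simp
  then show ?thesis using r rep_sub unfolding d_def e_def by metis
qed

lemma const_list: "length w = Suc k \<Longrightarrow> take k w = drop 1 w \<Longrightarrow> w = replicate (Suc k) (last w)"
proof (induction w arbitrary: k)
  case Nil then show ?case by simp
next
  case (Cons x w)
  show ?case
  proof (cases k)
    case 0 then show ?thesis using Cons by simp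
  next
    case (Suc k')
    then obtain y w' where w: "w = y # w'" using Cons(2) by (cases w) auto
    have "x # take k' w = w" using Cons(3) Suc by simp
    then have xy: "x = y" and tw: "take k' (y # w') = w'" using w by auto
    have "take k' w = drop 1 w" using tw w by simp
    then have "w = replicate (Suc k') (last w)" using Cons.IH Cons(2) Suc by simp
    moreover have "last w = y" using \<open>w = replicate (Suc k') (last w)\<close> w
      by (metis list.sel(1) replicate_Suc)
    ultimately have "w = replicate (Suc k') y" by simp
    moreover have "last (x # w) = y" using w \<open>last w = y\<close> by simp
    ultimately show ?thesis using Suc xy by simp
  qed
qed

lemma core:
  assumes ne': "S' \<noteq> []" and S: "S = S' @ [a]" and k: "k = length (lrs_of S)"
    and w: "w = drop (length S - k - 1) S"
  shows "(unique_in S w \<and> (\<forall>u. is_substring u w \<and> u \<noteq> w \<longrightarrow> repeating_in S u)) \<longleftrightarrow>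
         (w = replicate (k + 1) a \<or> k \<le> length (lrs_of S'))"
proof -
  have ne: "S \<noteq> []" using S by simp
  have kM: "k = Max (RR S)" using lrs_len[OF ne] k by simp
  have klt: "k < length S" using lrs_lt[OF ne] kM by simp
  have lS: "length S = length S' + 1" using S by simp
  define v where "v = drop (length S' - k) S'"
  have wv: "w = v @ [a]" using w S klt unfolding v_def by simp
  have lv: "length v = k" using klt lS unfolding v_def by simp
  have lw: "length w = k + 1" using wv lv by simp
  have nrw: "\<not> repeating_in S w"
  proof
    assume "repeating_in S w"
    then have "Suc k \<in> RR S" using klt w by (simp add: RR_def)
    then show False using lrs_ge kM by fastforce
  qed
  have occw: "length S - k - 1 \<in> OS S w" using w lw klt by (simp add: OS_def)
  have uniq: "unique_in S w" by (rule uniq_from[OF occw nrw])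
  have dw: "drop 1 w = drop (length S - k) S" using w klt by (simp add: Suc_diff_Suc)
  have tlrep: "repeating_in S (drop 1 w)"
    using lrs_in[OF ne] kM dw by (simp add: RR_def)
  have sub_iff: "(\<forall>u. is_substring u w \<and> u \<noteq> w \<longrightarrow> repeating_in S u) \<longleftrightarrow> repeating_in S v"
  proof
    assume "\<forall>u. is_substring u w \<and> u \<noteq> w \<longrightarrow> repeating_in S u"
    moreover have "is_substring v w" using wv unfolding is_substring_def by blast
    moreover have "v \<noteq> w" using wv by simp
    ultimately show "repeating_in S v" by blast
  next
    assume rv: "repeating_in S v"
    show "\<forall>u. is_substring u w \<and> u \<noteq> w \<longrightarrow> repeating_in S u"
    proof (intro allI impI)
      fix u assume "is_substring u w \<and> u \<noteq> w"
      then obtain p q where pq: "w = p @ u @ q" and uw: "u \<noteq> w" unfolding is_substring_def by blast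
      show "repeating_in S u"
      proof (cases "q = []")
        case True
        then have "p \<noteq> []" using pq uw by auto
        then obtain x p' where "p = x # p'" by (cases p) auto
        then have "drop 1 w = p' @ u @ []" using pq True by simp
        then show ?thesis using tlrep rep_sub by metis
      next
        case False
        then obtain q' x where "q = q' @ [x]" by (cases q rule: rev_cases) auto
        then have "v = p @ u @ q'" using pq wv by simp
        then show ?thesis using rv rep_sub by metis
      qed
    qed
  qed
  have main: "repeating_in S v \<longleftrightarrow> (w = replicate (k + 1) a \<or> k \<le> length (lrs_of S'))"
  proof
    assume "repeating_in S v"
    then obtain p q where p: "p \<in> OS S v" and q: "q \<in> OS S v" and pq: "p \<noteq> q"
      unfolding rep_iff by blast
    show "w = replicate (k + 1) a \<or> k \<le> length (lrs_of S')"
    proof (cases "p + k \<le> length S' \<and> q + k \<le> length S'")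
      case True
      then have "p \<in> OS S' v" "q \<in> OS S' v" using OS_butlast2 p q S lv by auto
      then have "repeating_in S' v" using pq unfolding rep_iff by blast
      then have "k \<in> RR S'" using klt lS unfolding RR_def v_def by simp
      then have "k \<le> length (lrs_of S')" using lrs_ge lrs_len[OF ne'] by simp
      then show ?thesis by simp
    next
      case False
      then obtain r where r: "r \<in> OS S v" "r + k > length S'" using p q by auto
      then have rr: "r = length S - k" using lS lv by (auto simp: OS_def)
      have "take k (drop r S) = v" using r lv by (simp add: OS_def)
      moreover have "length (drop r S) = k" using rr klt by simp
      ultimately have "drop 1 w = v" using dw rr by simp
      moreover have "take k w = v" using wv lv by simp
      ultimately have tk: "take k w = drop 1 w" by simp
      have lw': "length w = Suc k" using lw by simp
      note eq = const_list[OF lw' tk]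
      have la: "last w = a" using wv by simp
      have "w = replicate (Suc k) a" by (subst eq) (simp only: la)
      then show ?thesis by simp
    qed
  next
    assume "w = replicate (k + 1) a \<or> k \<le> length (lrs_of S')"
    then show "repeating_in S v"
    proof
      assume wr: "w = replicate (k + 1) a"
      have "v = replicate k a" using wr wv by (simp add: replicate_append_same[symmetric])
      have o1: "length S - k - 1 \<in> OS S v" using occw wv lv
        by (auto simp: OS_def)
      have "drop (length S - k) S = replicate k a" using dw wr by simp
      then have o2: "length S - k \<in> OS S v" using \<open>v = replicate k a\<close> klt by (simp add: OS_def)
      have "length S - k - 1 \<noteq> length S - k" using klt by simp
      then show ?thesis unfolding rep_iff using o1 o2 by blast
    next
      assume "k \<le> length (lrs_of S')"
      then have "repeating_in S' v" using suffix_rep[OF ne'] lrs_len[OF ne'] unfolding v_def by simp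
      then obtain p q where "p \<in> OS S' v" "q \<in> OS S' v" "p \<noteq> q" unfolding rep_iff by blast
      then have "p \<in> OS S v" "q \<in> OS S v" using OS_butlast S by auto
      then show ?thesis unfolding rep_iff using \<open>p \<noteq> q\<close> by blast
    qed
  qed
  show ?thesis using uniq sub_iff main by blast
qed

theorem lemma4:
  fixes T :: "'a list" and i j k n :: nat and \<alpha> :: 'a
  assumes "n = length T"
    and "1 \<le> i" and "i \<le> j" and "j < n"
    and "k = length (lrs T i (j + 1))"
    and "\<alpha> = T ! j"
  shows "(j + 1 - k, j + 1) \<in> MUS T i (j + 1) \<longleftrightarrow>
           (substr T (j + 1 - k) (j + 1) = replicate (k + 1) \<alpha> \<or> k \<le> length (lrs T i j))"
proof -
  define D where "D = drop (i - 1) T"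
  define m where "m = j + 2 - i"
  define S where "S = take m D"
  define S' where "S' = take (m - 1) D"
  have lD: "length D = n - (i - 1)" using assms(1) unfolding D_def by simp
  have mD: "m \<le> length D" using lD assms(2-4) unfolding m_def by simp
  have m2: "m \<ge> 2" using assms(3) unfolding m_def by simp
  have Dnth: "D ! (m - 1) = \<alpha>" using assms(2-6) mD unfolding D_def m_def by simp
  have SS': "S = S' @ [\<alpha>]"
  proof -
    have "m - 1 < length D" using mD m2 by simp
    moreover have "Suc (m - 1) = m" using m2 by simp
    ultimately show ?thesis
      unfolding S_def S'_def using take_Suc_conv_app_nth[of "m - 1" D] Dnth by simp
  qed
  have ne': "S' \<noteq> []" using mD m2 unfolding S'_def by (cases D) auto
  have lS: "length S = m" using mD unfolding S_def by simp
  have hS: "substr T i (j + 1) = S" unfolding substr_def S_def D_def m_def by simp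
  have hS': "substr T i j = S'" unfolding substr_def S'_def D_def m_def
    using assms(3) by (simp add: Suc_diff_le)
  have kk: "k = length (lrs_of S)" using assms(5) hS by (simp add: lrs_def)
  have ne: "S \<noteq> []" using SS' by simp
  have klt: "k < m" using lrs_lt[OF ne] lrs_len[OF ne] kk lS by simp
  define w where "w = drop (length S - k - 1) S"
  have hw: "substr T (j + 1 - k) (j + 1) = w"
  proof -
    have "w = drop (m - k - 1) (take m D)" unfolding w_def lS by (simp add: S_def)
    also have "\<dots> = take (k + 1) (drop (m - k - 1) D)" using klt by (simp add: drop_take)
    also have "\<dots> = take (k + 1) (drop (j - k) T)" unfolding D_def using klt assms(2,3) unfolding m_def
      by (simp add: add.commute)
    also have "\<dots> = substr T (j + 1 - k) (j + 1)" unfolding substr_def using klt assms(2,3) unfolding m_def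
      by (simp add: Suc_diff_le)
    finally show ?thesis by simp
  qed
  have "(j + 1 - k, j + 1) \<in> MUS T i (j + 1) \<longleftrightarrow>
        (unique_in S w \<and> (\<forall>u. is_substring u w \<and> u \<noteq> w \<longrightarrow> repeating_in S u))"
    using klt assms(2,3) unfolding MUS_def mem_Collect_eq prod.case hS hw m_def by auto
  also have "\<dots> \<longleftrightarrow> (w = replicate (k + 1) \<alpha> \<or> k \<le> length (lrs_of S'))"
    by (rule core[OF ne' SS' kk w_def])
  finally show ?thesis unfolding hw lrs_def hS' .
qed

end
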